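(* Let $M_1$ be the trefoil exterior, with $\pi_1(M_1)=B_3=\langle\sigma_1,\sigma_2\mid\sigma_1\sigma_2\sigma_1=\sigma_2\sigma_1\sigma_2\rangle$, peripheral subgroup $\langle\sigma_2,\Delta^2\rangle$ where $\Delta=\sigma_1\sigma_2\sigma_1$ (meridian $\sigma_2$), and let $M_2$ be the twisted $I$-bundle over the Klein bottle, with $\pi_1(M_2)=\langle x,y\mid xyx^{-1}=y^{-1}\rangle$ and peripheral subgroup $\langle y,x^2\rangle$. Let $M=M_1\cup_\phi M_2$, where the boundary homeomorphism $\phi$ acts on peripheral subgroups by $\phi(\sigma_2)=y^{-1}$, $\phi(\Delta^2)=y^{-1}x^2$. Then there is no slope $\alpha$ on $\partial M_1$ such that both $\alpha$ and $\phi(\alpha)$ are left-orderable slopes; i.e. the criterion "a left-orderable slope $\alpha$ with $\phi_*(\alpha)$ left-orderable implies $\pi_1(M)$ left-orderable" cannot be applied to $M$.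
   Context: For a 3-manifold $N$ with torus boundary, a slope is an isotopy class of essential simple closed curve on $\partial N$ (a primitive peripheral element up to sign), and it is a left-orderable slope if $\pi_1(N)/\langle\langle\alpha\rangle\rangle$ (the fundamental group of the Dehn filling along $\alpha$) is left-orderable; the trivial group is not left-orderable. *)

theory Defs
  imports Main "HOL-Algebra.Group"
begin

text \<open>A letter is a generator together with a sign (True = positive, False = inverse).
  A word is a list of letters.\<close>

type_synonym 'a word = "('a \<times> bool) list"

definition inv_word :: "'a word \<Rightarrow> 'a word" where
  "inv_word w = rev (map (\<lambda>(a, b). (a, \<not> b)) w)"

definition gen :: "'a \<Rightarrow> 'a word" where
  "gen a = [(a, True)]"

definition word_pow :: "'a word \<Rightarrow> int \<Rightarrow> 'a word" where
  "word_pow w k = (if 0 \<le> k then concat (replicate (nat k) w)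
                   else concat (replicate (nat (- k)) (inv_word w)))"

inductive pres_eq :: "'a word set \<Rightarrow> 'a word \<Rightarrow> 'a word \<Rightarrow> bool" for R where
  refl: "pres_eq R w w"
| sym: "pres_eq R u v \<Longrightarrow> pres_eq R v u"
| trans: "pres_eq R u v \<Longrightarrow> pres_eq R v w \<Longrightarrow> pres_eq R u w"
| cancel: "pres_eq R (u @ [(a, b), (a, \<not> b)] @ v) (u @ v)"
| relator: "r \<in> R \<Longrightarrow> pres_eq R (u @ r @ v) (u @ v)"

definition presented_group :: "'a word set \<Rightarrow> ('a word set) monoid" where
  "presented_group R =
     \<lparr> carrier = UNIV // {(u, v). pres_eq R u v},
       mult = (\<lambda>A B. {w. \<exists>u\<in>A. \<exists>v\<in>B. pres_eq R w (u @ v)}),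
       one = {w. pres_eq R w []} \<rparr>"

definition left_orderable :: "('g, 'm) monoid_scheme \<Rightarrow> bool" where
  "left_orderable G \<longleftrightarrow> group G \<and> carrier G \<noteq> {\<one>\<^bsub>G\<^esub>} \<and>
     (\<exists>less :: 'g \<Rightarrow> 'g \<Rightarrow> bool.
        (\<forall>g\<in>carrier G. \<not> less g g) \<and>
        (\<forall>g\<in>carrier G. \<forall>h\<in>carrier G. \<forall>k\<in>carrier G. less g h \<longrightarrow> less h k \<longrightarrow> less g k) \<and>
        (\<forall>g\<in>carrier G. \<forall>h\<in>carrier G. g = h \<or> less g h \<or> less h g) \<and>
        (\<forall>g\<in>carrier G. \<forall>h\<in>carrier G. \<forall>k\<in>carrier G.
            less h k \<longrightarrow> less (g \<otimes>\<^bsub>G\<^esub> h) (g \<otimes>\<^bsub>G\<^esub> k)))"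

text \<open>Trefoil exterior: \<open>\<pi>\<^sub>1 = B\<^sub>3 = \<langle>\<sigma>\<^sub>1, \<sigma>\<^sub>2 | \<sigma>\<^sub>1\<sigma>\<^sub>2\<sigma>\<^sub>1 = \<sigma>\<^sub>2\<sigma>\<^sub>1\<sigma>\<^sub>2\<rangle>\<close>.\<close>
datatype gen_B3 = Sig1 | Sig2

definition Delta :: "gen_B3 word" where
  "Delta = gen Sig1 @ gen Sig2 @ gen Sig1"

definition B3_rels :: "gen_B3 word set" where
  "B3_rels = {Delta @ inv_word (gen Sig2 @ gen Sig1 @ gen Sig2)}"

text \<open>Twisted I-bundle over the Klein bottle: \<open>\<langle>x, y | x y x\<^sup>-\<^sup>1 = y\<^sup>-\<^sup>1\<rangle>\<close>.\<close>
datatype gen_K = GX | GY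

definition K_rels :: "gen_K word set" where
  "K_rels = {gen GX @ gen GY @ inv_word (gen GX) @ gen GY}"

text \<open>The slope \<open>\<sigma>\<^sub>2\<^sup>p \<Delta>\<^sup>2\<^sup>q\<close> on \<open>\<partial>M\<^sub>1\<close> and its image under \<open>\<phi>\<close>:
  \<open>\<phi>(\<sigma>\<^sub>2) = y\<^sup>-\<^sup>1\<close>, \<open>\<phi>(\<Delta>\<^sup>2) = y\<^sup>-\<^sup>1x\<^sup>2\<close>.\<close>
definition slope1 :: "int \<Rightarrow> int \<Rightarrow> gen_B3 word" where
  "slope1 p q = word_pow (gen Sig2) p @ word_pow (Delta @ Delta) q"

definition slope2 :: "int \<Rightarrow> int \<Rightarrow> gen_K word" where
  "slope2 p q = word_pow (inv_word (gen GY)) p @ word_pow (inv_word (gen GY) @ gen GX @ gen GX) q"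

end

theory Submission
  imports Defs
begin

lemma pres_eq_ctx: "pres_eq R u v \<Longrightarrow> pres_eq R (x @ u @ y) (x @ v @ y)"
proof (induction rule: pres_eq.induct)
  case (refl w) then show ?case by (rule pres_eq.refl)
next
  case (sym u v) show ?case using sym.IH by (rule pres_eq.sym)
next
  case (trans u v w) then show ?case by (metis pres_eq.trans)
next
  case (cancel u a b v)
  show ?case using pres_eq.cancel[of R "x @ u" a b "v @ y"] by simp
next
  case (relator r u v)
  show ?case using pres_eq.relator[OF relator, of "x @ u" "v @ y"] by simp
qed

definition cls :: "'a word set \<Rightarrow> 'a word \<Rightarrow> 'a word set" where
  "cls R w = {v. pres_eq R w v}"

lemma cls_carrier: "cls R w \<in> carrier (presented_group R)"
  by (auto simp: presented_group_def quotient_def cls_def)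

lemma carrier_cls: "A \<in> carrier (presented_group R) \<Longrightarrow> \<exists>w. A = cls R w"
  by (auto simp: presented_group_def quotient_def cls_def)

lemma cls_mult: "cls R a \<otimes>\<^bsub>presented_group R\<^esub> cls R b = cls R (a @ b)"
proof -
  have "pres_eq R (a @ b) w \<longleftrightarrow> (\<exists>u. pres_eq R a u \<and> (\<exists>v. pres_eq R b v \<and> pres_eq R w (u @ v)))" for w
  proof
    assume "pres_eq R (a @ b) w"
    then show "\<exists>u. pres_eq R a u \<and> (\<exists>v. pres_eq R b v \<and> pres_eq R w (u @ v))"
      by (metis pres_eq.refl pres_eq.sym)
  next
    assume "\<exists>u. pres_eq R a u \<and> (\<exists>v. pres_eq R b v \<and> pres_eq R w (u @ v))"
    then obtain u v where h: "pres_eq R a u" "pres_eq R b v" "pres_eq R w (u @ v)" by blast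
    have "pres_eq R (a @ b) (u @ b)" using pres_eq_ctx[OF h(1), of "[]" b] by simp
    moreover have "pres_eq R (u @ b) (u @ v)" using pres_eq_ctx[OF h(2), of u "[]"] by simp
    ultimately show "pres_eq R (a @ b) w" using h(3) by (metis pres_eq.trans pres_eq.sym)
  qed
  then show ?thesis by (auto simp: presented_group_def cls_def)
qed

lemma cls_one: "\<one>\<^bsub>presented_group R\<^esub> = cls R []"
  by (auto simp: presented_group_def cls_def intro: pres_eq.sym)

lemma cls_rel: "r \<in> R \<Longrightarrow> cls R r = cls R []"
proof -
  assume "r \<in> R"
  then have e: "pres_eq R r []" using pres_eq.relator[of r R "[]" "[]"] by simp
  show ?thesis unfolding cls_def by (auto intro: pres_eq.trans[OF e] pres_eq.trans[OF pres_eq.sym[OF e]])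
qed

lemma cls_cancel: "cls R ([(a, c), (a, \<not> c)]) = cls R []"
proof -
  have e: "pres_eq R [(a, c), (a, \<not> c)] []" using pres_eq.cancel[of R "[]" a c "[]"] by simp
  show ?thesis unfolding cls_def by (auto intro: pres_eq.trans[OF e] pres_eq.trans[OF pres_eq.sym[OF e]])
qed

context
  fixes R :: "'a word set"
  assumes grp: "group (presented_group R)"
begin

interpretation G: group "presented_group R" by (rule grp)

lemma cls_inv_letter: "inv\<^bsub>presented_group R\<^esub> (cls R [(a, b)]) = cls R [(a, \<not> b)]"
proof (rule G.inv_equality)
  have "cls R [(a, \<not> b)] \<otimes>\<^bsub>presented_group R\<^esub> cls R [(a, b)] = cls R [(a, \<not> b), (a, \<not> \<not> b)]"
    by (simp add: cls_mult)
  also have "\<dots> = \<one>\<^bsub>presented_group R\<^esub>" by (simp only: cls_cancel cls_one)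
  finally show "cls R [(a, \<not> b)] \<otimes>\<^bsub>presented_group R\<^esub> cls R [(a, b)] = \<one>\<^bsub>presented_group R\<^esub>" .
qed (auto simp: cls_carrier)

lemma cls_Cons: "cls R (x # w) = cls R [x] \<otimes>\<^bsub>presented_group R\<^esub> cls R w"
  by (simp add: cls_mult)

lemma cls_inv_word: "cls R (inv_word w) = inv\<^bsub>presented_group R\<^esub> (cls R w)"
proof (induction w)
  case Nil
  then show ?case by (simp add: inv_word_def cls_one[symmetric])
next
  case (Cons x w)
  obtain a b where x: "x = (a, b)" by force
  have "inv_word (x # w) = inv_word w @ [(a, \<not> b)]" by (simp add: inv_word_def x)
  then have "cls R (inv_word (x # w)) = inv\<^bsub>presented_group R\<^esub> (cls R w) \<otimes>\<^bsub>presented_group R\<^esub> inv\<^bsub>presented_group R\<^esub> (cls R [x])"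
    by (simp add: cls_mult[symmetric] Cons cls_inv_letter x)
  also have "\<dots> = inv\<^bsub>presented_group R\<^esub> (cls R (x # w))"
    by (simp add: cls_Cons[of x w] G.inv_mult_group cls_carrier)
  finally show ?case .
qed

lemma cls_rep: "cls R (concat (replicate n w)) = cls R w [^]\<^bsub>presented_group R\<^esub> n"
proof (induction n)
  case 0
  then show ?case by (simp add: cls_one)
next
  case (Suc n)
  have "cls R (concat (replicate (Suc n) w)) = cls R w \<otimes>\<^bsub>presented_group R\<^esub> cls R (concat (replicate n w))"
    by (simp add: cls_mult)
  then show ?case using Suc G.nat_pow_Suc2[OF cls_carrier] by metis
qed

lemma cls_word_pow: "cls R (word_pow w k) = cls R w [^]\<^bsub>presented_group R\<^esub> k"
proof (cases "0 \<le> k")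
  case True
  then show ?thesis unfolding word_pow_def using True by (simp add: cls_rep pow_nat)
next
  case False
  then have "cls R (word_pow w k) = cls R (inv_word w) [^]\<^bsub>presented_group R\<^esub> nat (- k)"
    unfolding word_pow_def by (simp only: cls_rep if_False)
  also have "\<dots> = inv\<^bsub>presented_group R\<^esub> (cls R w [^]\<^bsub>presented_group R\<^esub> nat (- k))"
    by (simp only: cls_inv_word G.nat_pow_inv[OF cls_carrier])
  finally show ?thesis using False by (simp add: int_pow_def2[of _ "cls R w" k] del: pow_nat)
qed

lemma gens_trivial:
  assumes "\<And>a. cls R [(a, True)] = \<one>\<^bsub>presented_group R\<^esub>"
  shows "carrier (presented_group R) = {\<one>\<^bsub>presented_group R\<^esub>}"
proof -
  have l: "cls R [(a, b)] = \<one>\<^bsub>presented_group R\<^esub>" for a b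
  proof (cases b)
    case True then show ?thesis using assms by simp
  next
    case False
    then show ?thesis using cls_inv_letter[of a True] assms by simp
  qed
  have "cls R w = \<one>\<^bsub>presented_group R\<^esub>" for w
  proof (induction w)
    case Nil then show ?case by (simp add: cls_one)
  next
    case (Cons x w) then show ?case
      by (metis cls_Cons l prod.exhaust G.l_one G.one_closed)
  qed
  then show ?thesis using carrier_cls G.one_closed by blast
qed

end

lemma (in group) torsion_int:
  assumes tf: "\<And>g n. g \<in> carrier G \<Longrightarrow> g [^] (n::nat) = \<one> \<Longrightarrow> n > 0 \<Longrightarrow> g = \<one>"
    and g: "g \<in> carrier G" and e: "g [^] (k::int) = \<one>" and k: "k \<noteq> 0"
  shows "g = \<one>"
proof (cases "k < 0")
  case True
  then have "g [^] nat (-k) = \<one>" using e g by (simp add: int_pow_def2 del: pow_nat)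
  then show ?thesis by (rule tf[OF g]) (use True in simp)
next
  case False
  then have "g [^] nat k = \<one>" using e g by (simp add: int_pow_def2 del: pow_nat)
  then show ?thesis by (rule tf[OF g]) (use False k in simp)
qed

lemma (in group) lo_torsion:
  assumes lo: "left_orderable G" and g: "g \<in> carrier G" and e: "g [^] (n::nat) = \<one>" and n: "n > 0"
  shows "g = \<one>"
proof (rule ccontr)
  assume ne: "g \<noteq> \<one>\<^bsub>G\<^esub>"
  from lo obtain less where
    irr: "\<forall>g\<in>carrier G. \<not> less g g" and
    tr: "\<forall>g\<in>carrier G. \<forall>h\<in>carrier G. \<forall>k\<in>carrier G. less g h \<longrightarrow> less h k \<longrightarrow> less g k" and
    tot: "\<forall>g\<in>carrier G. \<forall>h\<in>carrier G. g = h \<or> less g h \<or> less h g" and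
    inv: "\<forall>g\<in>carrier G. \<forall>h\<in>carrier G. \<forall>k\<in>carrier G. less h k \<longrightarrow> less (g \<otimes> h) (g \<otimes> k)"
    unfolding left_orderable_def by blast
  obtain m where m: "n = Suc m" using n by (cases n) auto
  have "less \<one> g \<or> less g \<one>" using tot g ne by auto
  then show False
  proof
    assume l: "less \<one> g"
    have "less \<one> (g [^] Suc k)" for k
    proof (induction k)
      case 0 then show ?case using l g by simp
    next
      case (Suc k)
      have "less (g \<otimes> \<one>) (g \<otimes> g [^] Suc k)" using inv Suc.IH g nat_pow_closed one_closed by blast
      then have "less g (g [^] Suc (Suc k))" using g by (metis r_one nat_pow_Suc2)
      then show ?case using tr l g by (meson nat_pow_closed one_closed)
    qed
    then show False using e m irr one_closed by metis
  next
    assume l: "less g \<one>"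
    have "less (g [^] Suc k) \<one>" for k
    proof (induction k)
      case 0 then show ?case using l g by simp
    next
      case (Suc k)
      have "less (g \<otimes> g [^] Suc k) (g \<otimes> \<one>)" using inv Suc.IH g nat_pow_closed one_closed by blast
      then have "less (g [^] Suc (Suc k)) g" using g by (metis r_one nat_pow_Suc2)
      then show ?case using tr l g by (meson nat_pow_closed one_closed)
    qed
    then show False using e m irr one_closed by metis
  qed
qed


lemma (in group) B3_alg:
  assumes S: "S1 \<in> carrier G" "S2 \<in> carrier G"
    and rel: "S1 \<otimes> (S2 \<otimes> (S1 \<otimes> inv (S2 \<otimes> (S1 \<otimes> S2)))) = \<one>"
    and s2: "S2 = \<one>"
  shows "S1 = \<one>"
  using rel S by (simp add: s2)

lemma (in group) K_alg:
  assumes tf: "\<And>g n. g \<in> carrier G \<Longrightarrow> g [^] (n::nat) = \<one> \<Longrightarrow> n > 0 \<Longrightarrow> g = \<one>"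
    and XY: "X \<in> carrier G" "Y \<in> carrier G"
    and rel: "X \<otimes> (Y \<otimes> (inv X \<otimes> Y)) = \<one>"
    and sl: "(inv Y) [^] (p::int) \<otimes> (inv Y \<otimes> (X \<otimes> X)) [^] q = \<one>"
    and q: "(q::int) \<noteq> 0"
  shows "X = \<one> \<and> Y = \<one>"
proof -
  have c1: "X \<otimes> Y \<otimes> inv X = inv Y"
  proof -
    have "(X \<otimes> Y \<otimes> inv X) \<otimes> Y = \<one>" using rel XY by (simp add: m_assoc)
    then show ?thesis using XY by (metis inv_equality m_closed inv_closed)
  qed
  have c2: "X \<otimes> inv Y \<otimes> inv X = Y"
  proof -
    have "inv (X \<otimes> Y \<otimes> inv X) = X \<otimes> inv Y \<otimes> inv X"
      using XY by (simp add: inv_mult_group m_assoc)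
    then show ?thesis using c1 XY by simp
  qed
  have d1: "X \<otimes> Y = inv Y \<otimes> X"
  proof -
    have "X \<otimes> Y = (X \<otimes> Y \<otimes> inv X) \<otimes> X" using XY by (simp add: m_assoc)
    then show ?thesis using c1 by simp
  qed
  have d2: "X \<otimes> inv Y = Y \<otimes> X"
  proof -
    have "X \<otimes> inv Y = (X \<otimes> inv Y \<otimes> inv X) \<otimes> X" using XY by (simp add: m_assoc)
    then show ?thesis using c2 by simp
  qed
  define A where "A = X \<otimes> X"
  have A: "A \<in> carrier G" using XY by (simp add: A_def)
  have AY: "A \<otimes> Y = Y \<otimes> A"
  proof -
    have "A \<otimes> Y = X \<otimes> (X \<otimes> Y)" using XY by (simp add: A_def m_assoc)
    also have "\<dots> = (X \<otimes> inv Y) \<otimes> X" using XY by (simp add: d1 m_assoc)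
    also have "\<dots> = Y \<otimes> A" using XY by (simp add: d2 A_def m_assoc)
    finally show ?thesis .
  qed
  have AiY: "inv Y \<otimes> A = A \<otimes> inv Y"
  proof -
    have "inv Y \<otimes> A = inv Y \<otimes> (A \<otimes> Y) \<otimes> inv Y" using XY A by (simp add: m_assoc)
    also have "\<dots> = inv Y \<otimes> (Y \<otimes> A) \<otimes> inv Y" by (simp only: AY)
    also have "\<dots> = (inv Y \<otimes> Y) \<otimes> (A \<otimes> inv Y)" using XY A by (metis m_assoc inv_closed m_closed)
    also have "\<dots> = A \<otimes> inv Y" using XY A by (metis l_inv l_one m_closed inv_closed)
    finally show ?thesis .
  qed
  define n where "n = p + q"
  have "(inv Y) [^] p \<otimes> ((inv Y) [^] q \<otimes> A [^] q) = \<one>"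
  proof -
    have "(inv Y \<otimes> A) [^] q = (inv Y) [^] q \<otimes> A [^] q"
      using int_pow_mult_distrib[OF AiY] XY A by simp
    then show ?thesis using sl by (simp only: A_def)
  qed
  then have "(inv Y) [^] n \<otimes> A [^] q = \<one>"
    using XY A by (simp add: n_def int_pow_mult m_assoc)
  then have "inv (Y [^] n) \<otimes> A [^] q = \<one>" using XY by (simp add: int_pow_inv)
  then have e1: "A [^] q = Y [^] n"
    using XY A by (metis inv_equality inv_inv int_pow_closed inv_closed)
  define h where "h = (\<lambda>g. X \<otimes> g \<otimes> inv X)"
  have hom: "h \<in> hom G G"
  proof (rule homI)
    fix a assume "a \<in> carrier G" then show "h a \<in> carrier G" using XY by (simp add: h_def)
  next
    fix a b assume ab: "a \<in> carrier G" "b \<in> carrier G"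
    show "h (a \<otimes> b) = h a \<otimes> h b" using ab XY by (simp add: h_def m_assoc) (metis inv_closed l_inv l_one m_assoc m_closed)
  qed
  have hA: "h A = A" using XY by (simp add: h_def A_def m_assoc)
  have hY: "h Y = inv Y" using c1 by (simp add: h_def)
  have "h (A [^] q) = A [^] q" using hom_int_pow[OF hom A is_group is_group] hA by simp
  moreover have "h (Y [^] n) = inv (Y [^] n)"
    using hom_int_pow[OF hom XY(2) is_group is_group] hY XY by (simp add: int_pow_inv)
  ultimately have e2: "A [^] q = inv (Y [^] n)" using e1 by simp
  have "A [^] (q + q) = A [^] q \<otimes> A [^] q" using A by (rule int_pow_mult)
  also have "\<dots> = Y [^] n \<otimes> inv (Y [^] n)" using e1 e2 by simp
  also have "\<dots> = \<one>" using XY by simp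
  finally have "A [^] (q + q) = \<one>" .
  then have "A = \<one>" using torsion_int[OF tf A] q by simp
  then have "X [^] (2::nat) = \<one>" using XY by (simp add: A_def numeral_2_eq_2)
  then have X1: "X = \<one>" using tf XY by simp
  then have "Y [^] (2::nat) = \<one>" using rel XY by (simp add: numeral_2_eq_2)
  then have "Y = \<one>" using tf XY by simp
  with X1 show ?thesis by simp
qed


lemma cls_app: "cls R (a @ b) = cls R a \<otimes>\<^bsub>presented_group R\<^esub> cls R b"
  by (simp add: cls_mult)

lemma word_pow_0: "word_pow w 0 = []"
  by (simp add: word_pow_def)

theorem proposition25:
  fixes p q :: int
  assumes "coprime p q"
  shows "\<not> (left_orderable (presented_group (insert (slope1 p q) B3_rels)) \<and>
             left_orderable (presented_group (insert (slope2 p q) K_rels)))"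
proof
  define R1 where "R1 = insert (slope1 p q) B3_rels"
  define R2 where "R2 = insert (slope2 p q) K_rels"
  assume "left_orderable (presented_group (insert (slope1 p q) B3_rels)) \<and>
             left_orderable (presented_group (insert (slope2 p q) K_rels))"
  then have lo1: "left_orderable (presented_group R1)" and lo2: "left_orderable (presented_group R2)"
    by (simp_all add: R1_def R2_def)
  show False
  proof (cases "q = 0")
    case True
    have p: "p = 1 \<or> p = -1" using assms True by (simp add: zabs_def) arith?
    have g1: "group (presented_group R1)" using lo1 unfolding left_orderable_def by blast
    interpret G1: group "presented_group R1" by (rule g1)
    have nt: "carrier (presented_group R1) \<noteq> {\<one>\<^bsub>presented_group R1\<^esub>}"
      using lo1 unfolding left_orderable_def by blast
    define S1 where "S1 = cls R1 (gen Sig1)"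
    define S2 where "S2 = cls R1 (gen Sig2)"
    have S: "S1 \<in> carrier (presented_group R1)" "S2 \<in> carrier (presented_group R1)"
      by (simp_all add: S1_def S2_def cls_carrier)
    have "cls R1 (slope1 p q) = \<one>\<^bsub>presented_group R1\<^esub>"
      using cls_rel[of "slope1 p q" R1] by (simp add: R1_def cls_one)
    moreover have "cls R1 (slope1 p q) = S2 [^]\<^bsub>presented_group R1\<^esub> p"
      by (simp add: slope1_def True word_pow_0 cls_word_pow[OF g1] S2_def)
    ultimately have pw: "S2 [^]\<^bsub>presented_group R1\<^esub> p = \<one>\<^bsub>presented_group R1\<^esub>" by simp
    have s2: "S2 = \<one>\<^bsub>presented_group R1\<^esub>"
      using p
    proof
      assume "p = 1" then show ?thesis using pw S by simp
    next
      assume "p = -1" then show ?thesis using pw S G1.int_pow_neg[of S2 1] by simp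
    qed
    have "Delta @ inv_word (gen Sig2 @ gen Sig1 @ gen Sig2) \<in> R1" by (simp add: R1_def B3_rels_def)
    then have "cls R1 (Delta @ inv_word (gen Sig2 @ gen Sig1 @ gen Sig2)) = \<one>\<^bsub>presented_group R1\<^esub>"
      using cls_rel cls_one by metis
    moreover have "cls R1 (Delta @ inv_word (gen Sig2 @ gen Sig1 @ gen Sig2)) =
       S1 \<otimes>\<^bsub>presented_group R1\<^esub> (S2 \<otimes>\<^bsub>presented_group R1\<^esub> (S1 \<otimes>\<^bsub>presented_group R1\<^esub>
         inv\<^bsub>presented_group R1\<^esub> (S2 \<otimes>\<^bsub>presented_group R1\<^esub> (S1 \<otimes>\<^bsub>presented_group R1\<^esub> S2))))"
      by (simp add: Delta_def cls_app cls_inv_word[OF g1] G1.m_assoc cls_carrier S1_def S2_def)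
    ultimately have s1: "S1 = \<one>\<^bsub>presented_group R1\<^esub>" using G1.B3_alg[OF S _ s2] by simp
    have "cls R1 [(a, True)] = \<one>\<^bsub>presented_group R1\<^esub>" for a
      using s1 s2 by (cases a) (simp_all add: S1_def S2_def gen_def)
    then show False using gens_trivial[OF g1] nt by blast
  next
    case False
    have g2: "group (presented_group R2)" using lo2 unfolding left_orderable_def by blast
    interpret G2: group "presented_group R2" by (rule g2)
    have nt: "carrier (presented_group R2) \<noteq> {\<one>\<^bsub>presented_group R2\<^esub>}"
      using lo2 unfolding left_orderable_def by blast
    define X where "X = cls R2 (gen GX)"
    define Y where "Y = cls R2 (gen GY)"
    have XY: "X \<in> carrier (presented_group R2)" "Y \<in> carrier (presented_group R2)"
      by (simp_all add: X_def Y_def cls_carrier)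
    have "cls R2 (slope2 p q) = \<one>\<^bsub>presented_group R2\<^esub>"
      using cls_rel[of "slope2 p q" R2] by (simp add: R2_def cls_one)
    moreover have "cls R2 (slope2 p q) = (inv\<^bsub>presented_group R2\<^esub> Y) [^]\<^bsub>presented_group R2\<^esub> p
        \<otimes>\<^bsub>presented_group R2\<^esub> (inv\<^bsub>presented_group R2\<^esub> Y \<otimes>\<^bsub>presented_group R2\<^esub> (X \<otimes>\<^bsub>presented_group R2\<^esub> X)) [^]\<^bsub>presented_group R2\<^esub> q"
      by (simp add: slope2_def cls_app cls_word_pow[OF g2] cls_inv_word[OF g2] X_def Y_def)
    ultimately have sl: "(inv\<^bsub>presented_group R2\<^esub> Y) [^]\<^bsub>presented_group R2\<^esub> p
        \<otimes>\<^bsub>presented_group R2\<^esub> (inv\<^bsub>presented_group R2\<^esub> Y \<otimes>\<^bsub>presented_group R2\<^esub> (X \<otimes>\<^bsub>presented_group R2\<^esub> X)) [^]\<^bsub>presented_group R2\<^esub> q = \<one>\<^bsub>presented_group R2\<^esub>"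
      by simp
    have "gen GX @ gen GY @ inv_word (gen GX) @ gen GY \<in> R2" by (simp add: R2_def K_rels_def)
    then have "cls R2 (gen GX @ gen GY @ inv_word (gen GX) @ gen GY) = \<one>\<^bsub>presented_group R2\<^esub>"
      using cls_rel cls_one by metis
    moreover have "cls R2 (gen GX @ gen GY @ inv_word (gen GX) @ gen GY) =
       X \<otimes>\<^bsub>presented_group R2\<^esub> (Y \<otimes>\<^bsub>presented_group R2\<^esub> (inv\<^bsub>presented_group R2\<^esub> X \<otimes>\<^bsub>presented_group R2\<^esub> Y))"
      by (simp add: cls_app cls_inv_word[OF g2] X_def Y_def)
    ultimately have rel: "X \<otimes>\<^bsub>presented_group R2\<^esub> (Y \<otimes>\<^bsub>presented_group R2\<^esub> (inv\<^bsub>presented_group R2\<^esub> X \<otimes>\<^bsub>presented_group R2\<^esub> Y)) = \<one>\<^bsub>presented_group R2\<^esub>"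
      by simp
    have "X = \<one>\<^bsub>presented_group R2\<^esub> \<and> Y = \<one>\<^bsub>presented_group R2\<^esub>"
      by (rule G2.K_alg[OF G2.lo_torsion[OF lo2] XY rel sl False])
    then have "cls R2 [(a, True)] = \<one>\<^bsub>presented_group R2\<^esub>" for a
      by (cases a) (simp_all add: X_def Y_def gen_def)
    then show False using gens_trivial[OF g2] nt by blast
  qed
qed

end
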